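(* Let $\mathcal T=(S,\Sigma,\kappa)$ be an STS and $B\in\Sigma$. Suppose $\mathcal T$ is globally coarse w.r.t. $B$, i.e., there exists $p>0$ such that for every $s\in S$, either $\mathbb P^{\mathcal T}_{\delta_s}(\mathbf F B)\ge p$ or $\mathbb P^{\mathcal T}_{\delta_s}(\mathbf F B)=0$. Then $\mathcal T$ is decisive with respect to $B$.
   Context: A stochastic transition system (STS) is a triple $\mathcal T=(S,\Sigma,\kappa)$ where $(S,\Sigma)$ is a measurable space and $\kappa:S\times\Sigma\to[0,1]$ is a Markov kernel. $\mathrm{Dist}(S)$: probability distributions on $(S,\Sigma)$; $\delta_s$: Dirac at $s$. $\mathbb P^{\mathcal T}_\mu$ is the probability measure on runs $S^\omega$ induced by initial distribution $\mu$ and $\kappa$. $\mathbf F B$: runs visiting $B$ at some step. $\widetilde B=\{s\in S:\mathbb P^{\mathcal T}_{\delta_s}(\mathbf F B)=0\}$ (assumed measurable). $\mathcal T$ is decisive w.r.t. $B$ if for every $\mu\in\mathrm{Dist}(S)$, $\mathbb P^{\mathcal T}_\mu(\mathbf F B\vee\mathbf F\widetilde B)=1$. *)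

theory Defs
  imports "HOL-Probability.Probability"
begin

(* A stochastic transition system is modelled by a measurable space M
  (S = space M, Sigma = sets M) and a Markov kernel K, given as a measurable map
  K : M -> prob_algebra M (K s A is emeasure (K s) A).*)

definition markov_kernel :: "'s measure \<Rightarrow> ('s \<Rightarrow> 's measure) \<Rightarrow> bool" where
  "markov_kernel M K \<longleftrightarrow> K \<in> M \<rightarrow>\<^sub>M prob_algebra M"

primrec cyl_kernel :: "('s \<Rightarrow> 's measure) \<Rightarrow> 's set list \<Rightarrow> 's \<Rightarrow> ennreal" where
  "cyl_kernel K [] s = 1"
| "cyl_kernel K (A # As) s = (\<integral>\<^sup>+ t. indicator A t * cyl_kernel K As t \<partial>(K s))"

fun cyl_prob :: "('s \<Rightarrow> 's measure) \<Rightarrow> 's measure \<Rightarrow> 's set list \<Rightarrow> ennreal" where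
  "cyl_prob K \<mu> [] = 1"
| "cyl_prob K \<mu> (A # As) = (\<integral>\<^sup>+ s. indicator A s * cyl_kernel K As s \<partial>\<mu>)"

definition run_measure :: "'s measure \<Rightarrow> ('s \<Rightarrow> 's measure) \<Rightarrow> 's measure \<Rightarrow> 's stream measure" where
  "run_measure M K \<mu> = (THE P. sets P = sets (stream_space M) \<and> prob_space P \<and>
     (\<forall>As. set As \<subseteq> sets M \<longrightarrow> emeasure P (scylinder (space M) As) = cyl_prob K \<mu> As))"

definition Dist :: "'s measure \<Rightarrow> 's measure set" where
  "Dist M = {\<mu>. prob_space \<mu> \<and> sets \<mu> = sets M}"

definition ev_F :: "'s measure \<Rightarrow> 's set \<Rightarrow> 's stream set" where
  "ev_F M B = {\<omega> \<in> streams (space M). \<exists>n. \<omega> !! n \<in> B}"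

definition avoid_set :: "'s measure \<Rightarrow> ('s \<Rightarrow> 's measure) \<Rightarrow> 's set \<Rightarrow> 's set" where
  "avoid_set M K B = {s \<in> space M. measure (run_measure M K (return M s)) (ev_F M B) = 0}"

definition decisive :: "'s measure \<Rightarrow> ('s \<Rightarrow> 's measure) \<Rightarrow> 's set \<Rightarrow> bool" where
  "decisive M K B \<longleftrightarrow> (\<forall>\<mu> \<in> Dist M.
     measure (run_measure M K \<mu>) (ev_F M B \<union> ev_F M (avoid_set M K B)) = 1)"

definition globally_coarse :: "'s measure \<Rightarrow> ('s \<Rightarrow> 's measure) \<Rightarrow> 's set \<Rightarrow> bool" where
  "globally_coarse M K B \<longleftrightarrow> (\<exists>p>0. \<forall>s \<in> space M.
     measure (run_measure M K (return M s)) (ev_F M B) \<ge> p \<or>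
     measure (run_measure M K (return M s)) (ev_F M B) = 0)"

end

theory Submission
  imports Defs
begin


fun cylh :: "('s \<Rightarrow> 's measure) \<Rightarrow> 's set list \<Rightarrow> ('s \<Rightarrow> ennreal) \<Rightarrow> 's \<Rightarrow> ennreal" where
  "cylh K [] h s = h s"
| "cylh K (A # As) h s = (\<integral>\<^sup>+ t. indicator A t * cylh K As h t \<partial>(K s))"

lemma cylh_snoc: "cylh K (As @ [A]) h s = cylh K As (\<lambda>t. \<integral>\<^sup>+ y. indicator A y * h y \<partial>(K t)) s"
  by (induction As arbitrary: s) auto

lemma cylh_1: "cylh K As (\<lambda>_. 1) = cyl_kernel K As"
  by (induction As) (auto simp: fun_eq_iff)

lemma measurable_cylh:
  assumes K: "K \<in> M \<rightarrow>\<^sub>M subprob_algebra M" and As: "set As \<subseteq> sets M" and h: "h \<in> borel_measurable M"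
  shows "cylh K As h \<in> borel_measurable M"
  using As
proof (induction As)
  case Nil have "cylh K [] h = h" by (rule ext) simp
  then show ?case using h by simp
next
  case (Cons A As)
  then have [measurable]: "A \<in> sets M" "cylh K As h \<in> borel_measurable M" by auto
  have "(\<lambda>N. \<integral>\<^sup>+ t. indicator A t * cylh K As h t \<partial>N) \<in> borel_measurable (subprob_algebra M)"
    by measurable
  from measurable_comp[OF K this] show ?case by (simp add: comp_def)
qed

lemma measurable_cyl_kernel:
  assumes K: "K \<in> M \<rightarrow>\<^sub>M subprob_algebra M" and As: "set As \<subseteq> sets M"
  shows "cyl_kernel K As \<in> borel_measurable M"
  using measurable_cylh[OF K As, of "\<lambda>_. 1"] by (simp add: cylh_1)



locale run_constr =
  fixes M :: "'s measure" and K :: "'s \<Rightarrow> 's measure" and \<mu> :: "'s measure"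
  assumes K: "K \<in> M \<rightarrow>\<^sub>M prob_algebra M"
    and \<mu>: "prob_space \<mu>" "sets \<mu> = sets M"
begin

definition PP :: "nat \<Rightarrow> (nat \<Rightarrow> 's) \<Rightarrow> 's measure" where
  "PP i x = (case i of 0 \<Rightarrow> \<mu> | Suc j \<Rightarrow> K (x j))"

lemma Ksub[measurable]: "K \<in> M \<rightarrow>\<^sub>M subprob_algebra M"
  using K by (rule measurable_prob_algebraD)

lemma PP_meas: "PP i \<in> measurable (PiM {0..<i} (\<lambda>_. M)) (subprob_algebra M)"
proof (cases i)
  case 0
  have "\<mu> \<in> space (subprob_algebra M)"
    using \<mu> by (auto simp: space_subprob_algebra intro: prob_space_imp_subprob_space)
  then show ?thesis using 0 by (simp add: PP_def[abs_def])
next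
  case (Suc j)
  have "(\<lambda>x. x j) \<in> measurable (PiM {0..<i} (\<lambda>_. M)) M"
    using Suc by (intro measurable_component_singleton) auto
  from measurable_comp[OF this Ksub] show ?thesis using Suc by (simp add: PP_def[abs_def] comp_def)
qed

lemma PP_prob: "x \<in> space (PiM {0..<i} (\<lambda>_. M)) \<Longrightarrow> prob_space (PP i x)"
proof (cases i)
  case 0 then show ?thesis using \<mu> by (simp add: PP_def)
next
  case (Suc j)
  assume x: "x \<in> space (PiM {0..<i} (\<lambda>_. M))"
  then have "x j \<in> space M" using Suc by (auto simp: space_PiM)
  then have "K (x j) \<in> space (prob_algebra M)" using K by (metis measurable_space)
  then show ?thesis using Suc by (simp add: PP_def space_prob_algebra)
qed

sublocale IT: Ionescu_Tulcea PP "\<lambda>_. M"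
  unfolding Ionescu_Tulcea_def using PP_meas PP_prob by blast

abbreviation "u \<equiv> (\<lambda>_::nat. undefined :: 's)"

lemma meas_F:
  assumes "set As \<subseteq> sets M" "length As = Suc n" "h \<in> borel_measurable M" "n < m"
  shows "(\<lambda>x. (\<Prod>i<Suc n. indicator (As!i) (x i)) * h (x n) :: ennreal) \<in> borel_measurable (PiM {0..<m} (\<lambda>_. M))"
proof -
  have c: "(\<lambda>x. x i) \<in> measurable (PiM {0..<m} (\<lambda>_. M)) M" if "i < m" for i
    using that by (intro measurable_component_singleton) auto
  have "(\<lambda>x. indicator (As!i) (x i) :: ennreal) \<in> borel_measurable (PiM {0..<m} (\<lambda>_. M))" if "i < Suc n" for i
  proof -
    have "As ! i \<in> sets M" using assms that by (auto simp: subset_iff)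
    then have "(indicator (As!i) :: 's \<Rightarrow> ennreal) \<in> borel_measurable M" by measurable
    from measurable_comp[OF c this] that assms(4) show ?thesis by (simp add: comp_def)
  qed
  moreover have "(\<lambda>x. h (x n)) \<in> borel_measurable (PiM {0..<m} (\<lambda>_. M))"
    using measurable_comp[OF c assms(3), of n] assms(4) by (simp add: comp_def)
  ultimately show ?thesis by (intro borel_measurable_times_ennreal borel_measurable_prod_ennreal) auto
qed

lemma u_space: "u \<in> space (PiM {0..<0} (\<lambda>_. M))"
  by (simp add: space_PiM_empty)

lemma key:
  assumes "length As = Suc n" "set As \<subseteq> sets M" "h \<in> borel_measurable M"
  shows "(\<integral>\<^sup>+ x. (\<Prod>i<Suc n. indicator (As!i) (x i)) * h (x n) \<partial>IT.C 0 (Suc n) u)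
     = (\<integral>\<^sup>+ s. indicator (hd As) s * cylh K (tl As) h s \<partial>\<mu>)"
  using assms
proof (induction n arbitrary: As h)
  case 0
  then obtain A where As: "As = [A]" by (cases As) auto
  have "IT.C 0 (Suc 0) u = IT.eP 0 u"
    using bind_return[OF IT.measurable_eP u_space] by simp
  then show ?case
    using 0 As
    apply simp
    apply (subst IT.nn_integral_eP)
      apply (rule u_space)
    using meas_F[OF 0(2) 0(1) 0(3), of 1] apply simp
    apply (simp add: PP_def)
    done
next
  case (Suc n)
  obtain As' A where As: "As = As' @ [A]"
    by (metis Suc.prems(1) append_butlast_last_id list.size(3) nat.distinct(1))
  have lAs': "length As' = Suc n" using As Suc.prems by simp
  have sA: "set As' \<subseteq> sets M" "A \<in> sets M" using As Suc.prems by auto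
  define h' where "h' t = (\<integral>\<^sup>+ y. indicator A y * h y \<partial>K t)" for t
  have h'm: "h' \<in> borel_measurable M"
  proof -
    note [measurable] = sA(2) Suc.prems(3)
    have "(\<lambda>N. \<integral>\<^sup>+ y. indicator A y * h y \<partial>N) \<in> borel_measurable (subprob_algebra M)" by measurable
    from measurable_comp[OF Ksub this] show ?thesis by (simp add: comp_def h'_def[abs_def])
  qed
  have IH: "(\<integral>\<^sup>+ x. (\<Prod>i<Suc n. indicator (As'!i) (x i)) * h' (x n) \<partial>IT.C 0 (Suc n) u)
     = (\<integral>\<^sup>+ s. indicator (hd As') s * cylh K (tl As') h' s \<partial>\<mu>)"
    by (rule Suc.IH[OF lAs' sA(1) h'm])
  have Ceq: "IT.C 0 (Suc (Suc n)) u = IT.C 0 (Suc n) u \<bind> IT.eP (Suc n)" by simp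
  have ePm: "IT.eP (Suc n) \<in> IT.C 0 (Suc n) u \<rightarrow>\<^sub>M subprob_algebra (PiM {0..<Suc(Suc n)} (\<lambda>_. M))"
  proof -
    have s: "sets (IT.C 0 (Suc n) u) = sets (PiM {0..<Suc n} (\<lambda>_. M))"
      using IT.sets_C[OF u_space, of "Suc n"] by (simp only: add_0)
    show ?thesis by (subst measurable_cong_sets[OF s refl]) (rule IT.measurable_eP)
  qed
  have "(\<integral>\<^sup>+ x. (\<Prod>i<Suc (Suc n). indicator (As!i) (x i)) * h (x (Suc n)) \<partial>IT.C 0 (Suc (Suc n)) u)
     = (\<integral>\<^sup>+ x. \<integral>\<^sup>+ y. (\<Prod>i<Suc (Suc n). indicator (As!i) (y i)) * h (y (Suc n)) \<partial>IT.eP (Suc n) x \<partial>IT.C 0 (Suc n) u)"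
    unfolding Ceq
    apply (rule nn_integral_bind[where B="PiM {0..<Suc (Suc n)} (\<lambda>_. M)"])
    using meas_F[OF Suc.prems(2) Suc.prems(1) Suc.prems(3), of "Suc (Suc n)"] apply simp
    by (rule ePm)
  also have "\<dots> = (\<integral>\<^sup>+ x. (\<Prod>i<Suc n. indicator (As'!i) (x i)) * h' (x n) \<partial>IT.C 0 (Suc n) u)"
  proof (rule nn_integral_cong)
    fix x assume "x \<in> space (IT.C 0 (Suc n) u)"
    then have x: "x \<in> space (PiM {0..<Suc n} (\<lambda>_. M))"
      using IT.space_C[OF u_space, of "Suc n"] by (simp only: add_0)
    have prodeq: "(\<Prod>i<Suc (Suc n). indicator (As!i) ((x(Suc n := y)) i)) =
        (\<Prod>i<Suc n. indicator (As'!i) (x i)) * (indicator A y :: ennreal)" for y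
    proof -
      have "(\<Prod>i<Suc (Suc n). indicator (As!i) ((x(Suc n := y)) i) :: ennreal) =
        (\<Prod>i<Suc n. indicator (As!i) ((x(Suc n := y)) i)) * indicator (As!Suc n) y"
        by (simp add: lessThan_Suc mult.commute)
      also have "(\<Prod>i<Suc n. indicator (As!i) ((x(Suc n := y)) i) :: ennreal) = (\<Prod>i<Suc n. indicator (As'!i) (x i))"
        by (rule prod.cong) (auto simp: As nth_append lAs')
      finally show ?thesis using lAs' by (simp add: As nth_append)
    qed
    have "(\<integral>\<^sup>+ y. (\<Prod>i<Suc (Suc n). indicator (As!i) (y i)) * h (y (Suc n)) \<partial>IT.eP (Suc n) x)
       = (\<integral>\<^sup>+ y. (\<Prod>i<Suc (Suc n). indicator (As!i) ((x(Suc n := y)) i)) * h y \<partial>PP (Suc n) x)"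
      by (subst IT.nn_integral_eP[OF x]) (use meas_F[OF Suc.prems(2) Suc.prems(1) Suc.prems(3), of "Suc (Suc n)"] in simp_all)
    also have "\<dots> = (\<integral>\<^sup>+ y. (\<Prod>i<Suc n. indicator (As'!i) (x i)) * (indicator A y * h y) \<partial>K (x n))"
      unfolding prodeq by (simp add: PP_def mult.assoc)
    also have "\<dots> = (\<Prod>i<Suc n. indicator (As'!i) (x i)) * h' (x n)"
    proof -
      have "x n \<in> space M" using x by (auto simp: space_PiM)
      then have "K (x n) \<in> space (prob_algebra M)" using K by (metis measurable_space)
      then have sK: "sets (K (x n)) = sets M" by (simp add: space_prob_algebra)
      show ?thesis
        unfolding h'_def apply (rule nn_integral_cmult)
        apply (subst measurable_cong_sets[OF sK refl])
        using Suc.prems(3) sA(2) by measurable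
    qed
    finally show "(\<integral>\<^sup>+ y. (\<Prod>i<Suc (Suc n). indicator (As!i) (y i)) * h (y (Suc n)) \<partial>IT.eP (Suc n) x)
       = (\<Prod>i<Suc n. indicator (As'!i) (x i)) * h' (x n)" .
  qed
  also have "\<dots> = (\<integral>\<^sup>+ s. indicator (hd As) s * cylh K (tl As) h s \<partial>\<mu>)"
    unfolding IH using lAs' As by (cases As') (auto simp: cylh_snoc h'_def[abs_def])
  finally show ?case .
qed

lemma C_cyl:
  assumes "length As = Suc n" "set As \<subseteq> sets M"
  shows "emeasure (IT.C 0 (Suc n) u) (PiE {0..<Suc n} (\<lambda>i. As!i)) = cyl_prob K \<mu> As"
proof -
  have Xs: "PiE {0..<Suc n} (\<lambda>i. As!i) \<in> sets (PiM {0..<Suc n} (\<lambda>_. M))"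
    using assms by (intro sets_PiM_I_finite) (auto simp: subset_iff)
  have sC: "sets (IT.C 0 (Suc n) u) = sets (PiM {0..<Suc n} (\<lambda>_. M))"
    using IT.sets_C[OF u_space, of "Suc n"] by (simp only: add_0)
  have spC: "space (IT.C 0 (Suc n) u) = space (PiM {0..<Suc n} (\<lambda>_. M))"
    using IT.space_C[OF u_space, of "Suc n"] by (simp only: add_0)
  have "emeasure (IT.C 0 (Suc n) u) (PiE {0..<Suc n} (\<lambda>i. As!i)) =
     (\<integral>\<^sup>+ x. indicator (PiE {0..<Suc n} (\<lambda>i. As!i)) x \<partial>IT.C 0 (Suc n) u)"
    using Xs sC by simp
  also have "\<dots> = (\<integral>\<^sup>+ x. (\<Prod>i<Suc n. indicator (As!i) (x i)) * (\<lambda>_. 1) (x n) \<partial>IT.C 0 (Suc n) u)"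
  proof (rule nn_integral_cong)
    fix x assume "x \<in> space (IT.C 0 (Suc n) u)"
    then have ext: "x \<in> extensional {0..<Suc n}" using spC by (metis PiE_iff space_PiM)
    show "indicator (PiE {0..<Suc n} (\<lambda>i. As!i)) x = (\<Prod>i<Suc n. indicator (As!i) (x i)) * (\<lambda>_. 1::ennreal) (x n)"
    proof (cases "\<forall>i<Suc n. x i \<in> As!i")
      case True
      then have "x \<in> PiE {0..<Suc n} (\<lambda>i. As!i)" using ext by (auto simp: PiE_iff)
      then show ?thesis using True by (auto simp: indicator_def intro!: prod.neutral)
    next
      case False
      then obtain j where j: "j < Suc n" "x j \<notin> As!j" by auto
      then have "x \<notin> PiE {0..<Suc n} (\<lambda>i. As!i)" by (auto simp: PiE_iff)
      moreover have "(\<Prod>i<Suc n. indicator (As!i) (x i) :: ennreal) = 0"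
        using j by (intro prod_zero) (auto intro!: bexI[of _ j])
      ultimately show ?thesis by simp
    qed
  qed
  also have "\<dots> = (\<integral>\<^sup>+ s. indicator (hd As) s * cylh K (tl As) (\<lambda>_. 1) s \<partial>\<mu>)"
    by (rule key[OF assms]) simp
  also have "\<dots> = cyl_prob K \<mu> As"
    using assms(1) by (cases As) (auto simp: cylh_1)
  finally show ?thesis .
qed

lemma lim_cyl:
  assumes "length As = Suc n" "set As \<subseteq> sets M"
  shows "emeasure IT.PF.lim (prod_emb UNIV (\<lambda>_. M) {0..<Suc n} (PiE {0..<Suc n} (\<lambda>i. As!i))) = cyl_prob K \<mu> As"
proof -
  have Xs: "PiE {0..<Suc n} (\<lambda>i. As!i) \<in> sets (PiM {0..<Suc n} (\<lambda>_. M))"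
    using assms by (intro sets_PiM_I_finite) (auto simp: subset_iff)
  have sub: "PiE {0..<Suc n} (\<lambda>i. As!i) \<subseteq> (\<Pi>\<^sub>E i\<in>{0..<Suc n}. space M)"
    using assms Xs[THEN sets.sets_into_space] by (simp add: space_PiM)
  show ?thesis
    apply (subst IT.lim[OF _ Xs], simp)
    apply (subst IT.emeasure_CI[OF subset_refl Xs])
    apply (subst prod_emb_id[OF sub])
    by (rule C_cyl[OF assms])
qed

definition R where "R = distr IT.PF.lim (stream_space M) to_stream"

lemma to_stream_meas: "to_stream \<in> IT.PF.lim \<rightarrow>\<^sub>M stream_space M"
  by (subst measurable_cong_sets[OF IT.PF.sets_lim refl]) (rule measurable_to_stream)

end

lemma scyl_iff: "\<omega> \<in> streams S \<Longrightarrow> (\<omega> \<in> scylinder S As \<longleftrightarrow> (\<forall>i<length As. \<omega> !! i \<in> As!i))"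
proof (induction As arbitrary: \<omega>)
  case Nil then show ?case by simp
next
  case (Cons A As)
  have "stl \<omega> \<in> streams S" using Cons.prems by (rule streams_stl)
  then show ?case using Cons.prems Cons.IH[of "stl \<omega>"]
    by (auto simp: less_Suc_eq_0_disj)
qed

lemma to_stream_snth: "to_stream X !! i = X i"
  by (simp add: to_stream_def)

context run_constr begin

lemma preim:
  assumes "set As \<subseteq> sets M"
  shows "to_stream -` scylinder (space M) As \<inter> space IT.PF.lim = prod_emb UNIV (\<lambda>_. M) {0..<length As} (PiE {0..<length As} (\<lambda>i. As!i))"
proof (intro set_eqI iffI)
  fix x assume x: "x \<in> to_stream -` scylinder (space M) As \<inter> space IT.PF.lim"
  then have sp: "\<forall>i. x i \<in> space M" by (auto simp: space_PiM)
  then have "to_stream x \<in> streams (space M)" by (simp add: to_stream_in_streams)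
  with x have "\<forall>i<length As. x i \<in> As!i" by (auto simp: scyl_iff to_stream_snth)
  with sp show "x \<in> prod_emb UNIV (\<lambda>_. M) {0..<length As} (PiE {0..<length As} (\<lambda>i. As!i))"
    by (auto simp: prod_emb_def PiE_iff)
next
  fix x assume x: "x \<in> prod_emb UNIV (\<lambda>_. M) {0..<length As} (PiE {0..<length As} (\<lambda>i. As!i))"
  then have sp: "\<forall>i. x i \<in> space M" and c: "\<forall>i<length As. x i \<in> As!i"
    by (auto simp: prod_emb_def PiE_iff)
  then have "to_stream x \<in> streams (space M)" by (simp add: to_stream_in_streams)
  with sp c show "x \<in> to_stream -` scylinder (space M) As \<inter> space IT.PF.lim"
    by (auto simp: scyl_iff to_stream_snth space_PiM)
qed

lemma R_cyl_ne:
  assumes "As \<noteq> []" "set As \<subseteq> sets M"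
  shows "emeasure R (scylinder (space M) As) = cyl_prob K \<mu> As"
proof -
  obtain n where n: "length As = Suc n" using assms(1) by (cases As) auto
  have X: "scylinder (space M) As \<in> sets (stream_space M)" using assms(2) by (intro sets_scylinder) auto
  have "emeasure R (scylinder (space M) As) = emeasure IT.PF.lim (to_stream -` scylinder (space M) As \<inter> space IT.PF.lim)"
    unfolding R_def by (rule emeasure_distr[OF to_stream_meas X])
  also have "\<dots> = cyl_prob K \<mu> As"
    unfolding preim[OF assms(2)] n by (rule lim_cyl[OF n assms(2)])
  finally show ?thesis .
qed

lemma streams_cyl: "streams (space M) = scylinder (space M) [space M]"
proof
  show "streams (space M) \<subseteq> scylinder (space M) [space M]"
    by (auto intro: streams_shd streams_stl)
qed (rule scylinder_streams)

lemma prob_R: "prob_space R"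
proof (rule prob_spaceI)
  have "space R = streams (space M)" by (simp add: R_def space_stream_space)
  also have "\<dots> = scylinder (space M) [space M]" by (rule streams_cyl)
  finally have "emeasure R (space R) = cyl_prob K \<mu> [space M]" using R_cyl_ne[of "[space M]"] by simp
  also have "\<dots> = emeasure \<mu> (space \<mu>)"
    using \<mu> sets_eq_imp_space_eq[OF \<mu>(2)] by (simp add: nn_integral_indicator)
  also have "\<dots> = 1" using \<mu> prob_space.emeasure_space_1 by blast
  finally show "emeasure R (space R) = 1" .
qed

lemma R_cyl:
  assumes "set As \<subseteq> sets M"
  shows "emeasure R (scylinder (space M) As) = cyl_prob K \<mu> As"
proof (cases "As = []")
  case True
  have "space R = streams (space M)" by (simp add: R_def space_stream_space)
  then show ?thesis using True prob_space.emeasure_space_1[OF prob_R] by simp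
qed (use R_cyl_ne assms in auto)

lemma sets_R: "sets R = sets (stream_space M)" by (simp add: R_def)

end

lemma run_unique:
  assumes "prob_space P" "prob_space Q" "sets P = sets (stream_space M)" "sets Q = sets (stream_space M)"
    and "\<And>As. set As \<subseteq> sets M \<Longrightarrow> emeasure P (scylinder (space M) As) = emeasure Q (scylinder (space M) As)"
  shows "P = Q"
proof (rule stream_space_eq_scylinder[where G="sets M" and C="{space M}" and S=M])
  show "Int_stable (sets M)" by (auto simp: Int_stable_def)
  show "sets M \<subseteq> Pow (space M)" using sets.space_closed[of M] by simp
  fix xs assume "xs \<in> lists (sets M)"
  then have "set xs \<subseteq> sets M" by auto
  then show "emeasure P (scylinder (space M) xs) = emeasure Q (scylinder (space M) xs)" by (rule assms(5))
qed (use assms in simp_all)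

lemma run_measure_props:
  assumes K: "markov_kernel M K" and \<mu>: "\<mu> \<in> Dist M"
  shows "sets (run_measure M K \<mu>) = sets (stream_space M) \<and> prob_space (run_measure M K \<mu>) \<and>
     (\<forall>As. set As \<subseteq> sets M \<longrightarrow> emeasure (run_measure M K \<mu>) (scylinder (space M) As) = cyl_prob K \<mu> As)"
proof -
  have "K \<in> M \<rightarrow>\<^sub>M prob_algebra M" using K unfolding markov_kernel_def .
  moreover have "prob_space \<mu>" "sets \<mu> = sets M" using \<mu> unfolding Dist_def by auto
  ultimately have "run_constr M K \<mu>" unfolding run_constr_def by blast
  then interpret run_constr M K \<mu> .
  have ex: "\<exists>!P. sets P = sets (stream_space M) \<and> prob_space P \<and>
     (\<forall>As. set As \<subseteq> sets M \<longrightarrow> emeasure P (scylinder (space M) As) = cyl_prob K \<mu> As)"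
  proof (rule ex1I[of _ R])
    show "sets R = sets (stream_space M) \<and> prob_space R \<and>
     (\<forall>As. set As \<subseteq> sets M \<longrightarrow> emeasure R (scylinder (space M) As) = cyl_prob K \<mu> As)"
      using sets_R prob_R R_cyl by (intro conjI allI impI)
  next
    fix P assume P: "sets P = sets (stream_space M) \<and> prob_space P \<and>
     (\<forall>As. set As \<subseteq> sets M \<longrightarrow> emeasure P (scylinder (space M) As) = cyl_prob K \<mu> As)"
    show "P = R"
    proof (rule run_unique)
      fix As :: "'a set list" assume As: "set As \<subseteq> sets M"
      then show "emeasure P (scylinder (space M) As) = emeasure R (scylinder (space M) As)"
        using P R_cyl[OF As] by simp
    qed (use P sets_R prob_R in simp_all)
  qed
  show ?thesis unfolding run_measure_def by (rule theI'[OF ex])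
qed



definition cyl :: "'s measure \<Rightarrow> nat \<Rightarrow> 's set \<Rightarrow> 's stream set" where
  "cyl M n X = scylinder (space M) (replicate (Suc n) X)"

lemma cyl_iff: "\<omega> \<in> cyl M n X \<longleftrightarrow> \<omega> \<in> streams (space M) \<and> (\<forall>i\<le>n. \<omega> !! i \<in> X)"
proof (cases "\<omega> \<in> streams (space M)")
  case True show ?thesis unfolding cyl_def scyl_iff[OF True] using True by (auto simp: less_Suc_eq_le simp del: replicate.simps)
next
  case False then show ?thesis unfolding cyl_def using scylinder_streams by blast
qed

lemma cyl_sets: "X \<in> sets M \<Longrightarrow> cyl M n X \<in> sets (stream_space M)"
  unfolding cyl_def by (intro sets_scylinder) auto

lemma cyl_dec: "decseq (\<lambda>n. cyl M n X)"
  by (auto simp: decseq_def cyl_iff)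

lemma cyl_Int: "(\<Inter>n. cyl M n X) = {\<omega> \<in> streams (space M). \<forall>i. \<omega> !! i \<in> X}"
  by (rule set_eqI) (simp add: cyl_iff, blast)

lemma evF_sets:
  assumes "X \<in> sets M" shows "ev_F M X \<in> sets (stream_space M)"
proof -
  have "ev_F M X = (\<Union>n. (\<lambda>\<omega>. \<omega> !! n) -` X \<inter> space (stream_space M))"
    by (auto simp: ev_F_def space_stream_space)
  also have "\<dots> \<in> sets (stream_space M)"
    using assms by (intro sets.countable_UN measurable_sets[OF measurable_snth]) auto
  finally show ?thesis .
qed

locale coarse_ctx =
  fixes M :: "'s measure" and K :: "'s \<Rightarrow> 's measure" and B :: "'s set" and p :: real
  assumes Kk: "markov_kernel M K"
    and B: "B \<in> sets M"
    and Bt: "avoid_set M K B \<in> sets M"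
    and p: "p > 0"
    and coarse: "\<And>s. s \<in> space M \<Longrightarrow>
       measure (run_measure M K (return M s)) (ev_F M B) \<ge> p \<or>
       measure (run_measure M K (return M s)) (ev_F M B) = 0"
begin

abbreviation "Bt \<equiv> avoid_set M K B"
definition "D = space M - (B \<union> Bt)"
definition "E = space M - B"
abbreviation "T s \<equiv> run_measure M K (return M s)"
definition "g n s = indicator D s * cyl_kernel K (replicate n D) s"
definition "G s = (INF n. g n s)"
definition "q = (SUP s\<in>space M. G s)"

lemma Ksub[measurable]: "K \<in> M \<rightarrow>\<^sub>M subprob_algebra M"
  using Kk unfolding markov_kernel_def by (rule measurable_prob_algebraD)

lemma Ks: assumes "s \<in> space M" shows "prob_space (K s)" "sets (K s) = sets M" "space (K s) = space M"
proof -
  have "K s \<in> space (prob_algebra M)" using Kk assms unfolding markov_kernel_def by (metis measurable_space)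
  then show "prob_space (K s)" and sK: "sets (K s) = sets M" by (auto simp: space_prob_algebra)
  from sK show "space (K s) = space M" by (rule sets_eq_imp_space_eq)
qed

lemma D_sets[measurable]: "D \<in> sets M" and E_sets[measurable]: "E \<in> sets M"
  using B Bt unfolding D_def E_def by auto

lemma ck_le1: "set As \<subseteq> sets M \<Longrightarrow> s \<in> space M \<Longrightarrow> cyl_kernel K As s \<le> 1"
proof (induction As arbitrary: s)
  case Nil then show ?case by simp
next
  case (Cons A As)
  have "(\<integral>\<^sup>+ t. indicator A t * cyl_kernel K As t \<partial>K s) \<le> (\<integral>\<^sup>+ t. 1 \<partial>K s)"
  proof (rule nn_integral_mono)
    fix t assume "t \<in> space (K s)"
    then have "cyl_kernel K As t \<le> 1" using Cons Ks(3)[OF Cons.prems(2)] by auto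
    then show "indicator A t * cyl_kernel K As t \<le> 1" by (auto split: split_indicator)
  qed
  also have "\<dots> = 1" using prob_space.emeasure_space_1[OF Ks(1)[OF Cons.prems(2)]] by simp
  finally show ?case by simp
qed

lemma ck_mono_rep: "X \<in> sets M \<Longrightarrow> s \<in> space M \<Longrightarrow> cyl_kernel K (replicate (Suc n) X) s \<le> cyl_kernel K (replicate n X) s"
proof (induction n arbitrary: s)
  case 0 then show ?case using ck_le1[of "[X]" s] by simp
next
  case (Suc n)
  have "(\<integral>\<^sup>+ t. indicator X t * cyl_kernel K (replicate (Suc n) X) t \<partial>K s) \<le> (\<integral>\<^sup>+ t. indicator X t * cyl_kernel K (replicate n X) t \<partial>K s)"
  proof (rule nn_integral_mono)
    fix t assume "t \<in> space (K s)"
    then show "indicator X t * cyl_kernel K (replicate (Suc n) X) t \<le> indicator X t * cyl_kernel K (replicate n X) t"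
      using Suc Ks(3)[OF Suc.prems(2)] by (auto intro: mult_left_mono)
  qed
  then show ?case by simp
qed

lemma ck_mono_sub: "X \<subseteq> Y \<Longrightarrow> s \<in> space M \<Longrightarrow> cyl_kernel K (replicate n X) s \<le> cyl_kernel K (replicate n Y) s"
proof (induction n arbitrary: s)
  case 0 then show ?case by simp
next
  case (Suc n)
  have "(\<integral>\<^sup>+ t. indicator X t * cyl_kernel K (replicate n X) t \<partial>K s) \<le> (\<integral>\<^sup>+ t. indicator Y t * cyl_kernel K (replicate n Y) t \<partial>K s)"
  proof (rule nn_integral_mono)
    fix t assume "t \<in> space (K s)"
    then have "cyl_kernel K (replicate n X) t \<le> cyl_kernel K (replicate n Y) t"
      using Suc Ks(3)[OF Suc.prems(2)] by auto
    moreover have "indicator X t \<le> (indicator Y t :: ennreal)" using Suc.prems(1) by (auto split: split_indicator)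
    ultimately show "indicator X t * cyl_kernel K (replicate n X) t \<le> indicator Y t * cyl_kernel K (replicate n Y) t"
      by (intro mult_mono) auto
  qed
  then show ?case by simp
qed

lemma g_meas[measurable]: "g n \<in> borel_measurable M"
proof -
  have "cyl_kernel K (replicate n D) \<in> borel_measurable M"
    by (rule measurable_cyl_kernel[OF Ksub]) auto
  then show ?thesis unfolding g_def[abs_def] by measurable
qed

lemma D_space: "D \<subseteq> space M" unfolding D_def by auto

lemma g_out: "s \<notin> D \<Longrightarrow> g n s = 0" by (simp add: g_def)

lemma g_dec: "g (Suc n) s \<le> g n s"
proof (cases "s \<in> D")
  case True then have "s \<in> space M" using D_space by auto
  with True show ?thesis using ck_mono_rep[OF D_sets, of s n] by (simp add: g_def)
qed (simp add: g_out)

lemma g_decseq: "decseq g"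
  by (intro decseq_SucI le_funI g_dec)

lemma g_le1: "g n s \<le> 1"
proof (cases "s \<in> D")
  case True then have "s \<in> space M" using D_space by auto
  have "set (replicate n D) \<subseteq> sets M" using D_sets by (induction n) auto
  with True \<open>s \<in> space M\<close> show ?thesis using ck_le1[of "replicate n D" s] by (simp add: g_def)
qed (simp add: g_out)

lemma g_Suc: "g (Suc n) s = indicator D s * (\<integral>\<^sup>+ t. g n t \<partial>K s)"
  by (simp add: g_def)

lemma G_le_g: "G s \<le> g n s" unfolding G_def by (rule INF_lower) simp

lemma G_out: "s \<notin> D \<Longrightarrow> G s = 0" using G_le_g[of s 0] by (simp add: g_out)

lemma G_meas[measurable]: "G \<in> borel_measurable M"
  unfolding G_def[abs_def] by measurable

lemma G_eq: assumes s: "s \<in> space M" shows "G s = indicator D s * (\<integral>\<^sup>+ t. G t \<partial>K s)"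
proof (cases "s \<in> D")
  case False then show ?thesis by (simp add: G_out)
next
  case True
  have "G s = (INF n. g (Suc n) s)"
    unfolding G_def
  proof (rule antisym)
    show "(INF n. g n s) \<le> (INF n. g (Suc n) s)" by (rule INF_mono) auto
    show "(INF n. g (Suc n) s) \<le> (INF n. g n s)" by (rule INF_mono) (use g_dec in auto)
  qed
  also have "\<dots> = (INF n. \<integral>\<^sup>+ t. g n t \<partial>K s)" using True by (simp add: g_Suc)
  also have "\<dots> = (\<integral>\<^sup>+ t. G t \<partial>K s)"
    unfolding G_def
  proof (rule nn_integral_monotone_convergence_INF_decseq[symmetric])
    show "decseq g" by (rule g_decseq)
    fix i
    show "g i \<in> borel_measurable (K s)" by (subst measurable_cong_sets[OF Ks(2)[OF s] refl]) simp
    have "(\<integral>\<^sup>+ t. g i t \<partial>K s) \<le> (\<integral>\<^sup>+ t. 1 \<partial>K s)" by (intro nn_integral_mono g_le1)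
    also have "\<dots> = 1" using prob_space.emeasure_space_1[OF Ks(1)[OF s]] by simp
    finally show "(\<integral>\<^sup>+ t. g i t \<partial>K s) < \<infinity>" by (simp add: order_le_less_trans)
  qed
  finally show ?thesis using True by simp
qed

lemma G_le_q: "s \<in> space M \<Longrightarrow> G s \<le> q"
  unfolding q_def by (rule SUP_upper)

lemma q_le1: "q \<le> 1"
  unfolding q_def by (rule SUP_least) (use G_le_g[of _ 0] g_le1[of 0] order_trans in blast)

lemma G_le: "s \<in> space M \<Longrightarrow> G s \<le> q * g n s"
proof (induction n arbitrary: s)
  case 0
  show ?case
  proof (cases "s \<in> D")
    case True then show ?thesis using G_le_q[OF 0] by (simp add: g_def)
  qed (simp add: G_out)
next
  case (Suc n)
  have "G s = indicator D s * (\<integral>\<^sup>+ t. G t \<partial>K s)" by (rule G_eq[OF Suc.prems])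
  also have "\<dots> \<le> indicator D s * (\<integral>\<^sup>+ t. q * g n t \<partial>K s)"
    by (intro mult_left_mono nn_integral_mono) (use Suc.IH Ks(3)[OF Suc.prems] in auto)
  also have "\<dots> = indicator D s * (q * (\<integral>\<^sup>+ t. g n t \<partial>K s))"
    by (subst nn_integral_cmult) (auto simp: measurable_cong_sets[OF Ks(2)[OF Suc.prems] refl])
  also have "\<dots> = q * g (Suc n) s" by (simp add: g_Suc ac_simps)
  finally show ?case .
qed

lemma ret_Dist: "s \<in> space M \<Longrightarrow> return M s \<in> Dist M"
  by (simp add: Dist_def prob_space_return)

lemma T_props: assumes "s \<in> space M"
  shows "sets (T s) = sets (stream_space M)" "prob_space (T s)"
    "\<And>As. set As \<subseteq> sets M \<Longrightarrow> emeasure (T s) (scylinder (space M) As) = cyl_prob K (return M s) As"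
  using run_measure_props[OF Kk ret_Dist[OF assms]] by auto

lemma T_cyl: assumes s: "s \<in> space M" and X: "X \<in> sets M"
  shows "emeasure (T s) (cyl M n X) = indicator X s * cyl_kernel K (replicate n X) s"
proof -
  have sr: "set (replicate n X) \<subseteq> sets M" using X by (induction n) auto
  then have ck: "cyl_kernel K (replicate n X) \<in> borel_measurable M" by (rule measurable_cyl_kernel[OF Ksub])
  have "set (replicate (Suc n) X) \<subseteq> sets M" using X sr by simp
  from T_props(3)[OF s this] have "emeasure (T s) (cyl M n X) = cyl_prob K (return M s) (X # replicate n X)"
    by (simp add: cyl_def)
  also have "\<dots> = indicator X s * cyl_kernel K (replicate n X) s"
    using s X ck by (simp add: nn_integral_return)
  finally show ?thesis .
qed

lemma G_D: assumes sD: "s \<in> D" shows "G s \<le> q * ennreal (1 - p)"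
proof -
  have s: "s \<in> space M" using sD D_space by auto
  interpret Ts: prob_space "T s" by (rule T_props(2)[OF s])
  have sT: "sets (T s) = sets (stream_space M)" by (rule T_props(1)[OF s])
  have spT: "space (T s) = streams (space M)"
    using sets_eq_imp_space_eq[OF sT] by (simp add: space_stream_space)
  have FB: "ev_F M B \<in> Ts.events" using evF_sets[OF B] sT by simp
  have lim: "(\<lambda>n. emeasure (T s) (cyl M n E)) \<longlonglongrightarrow> emeasure (T s) (\<Inter>n. cyl M n E)"
    by (rule Lim_emeasure_decseq) (use cyl_sets[OF E_sets] sT cyl_dec in auto)
  have Ieq: "(\<Inter>n. cyl M n E) = space (T s) - ev_F M B"
    unfolding cyl_Int spT by (auto simp: E_def ev_F_def streams_iff_snth)
  have "s \<notin> Bt" using sD by (simp add: D_def)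
  then have "measure (T s) (ev_F M B) \<noteq> 0" using s by (simp add: avoid_set_def)
  then have pm: "measure (T s) (ev_F M B) \<ge> p" using coarse[OF s] by auto
  have L: "emeasure (T s) (\<Inter>n. cyl M n E) \<le> ennreal (1 - p)"
    unfolding Ieq Ts.emeasure_eq_measure Ts.prob_compl[OF FB] using pm by (intro ennreal_leI) simp
  have lim2: "(\<lambda>n. q * emeasure (T s) (cyl M n E)) \<longlonglongrightarrow> q * emeasure (T s) (\<Inter>n. cyl M n E)"
    by (rule ennreal_tendsto_cmult[OF _ lim]) (use q_le1 in \<open>simp add: order_le_less_trans\<close>)
  have "G s \<le> q * emeasure (T s) (\<Inter>n. cyl M n E)"
  proof (rule LIMSEQ_le_const[OF lim2], intro exI allI impI)
    fix n
    have "g n s \<le> emeasure (T s) (cyl M n E)"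
      unfolding T_cyl[OF s E_sets] g_def
      using sD ck_mono_sub[of D E s n] s by (auto simp: D_def E_def)
    then show "G s \<le> q * emeasure (T s) (cyl M n E)"
      using G_le[OF s, of n] by (meson mult_left_mono order_trans zero_le)
  qed
  also have "\<dots> \<le> q * ennreal (1 - p)" using L by (rule mult_left_mono) simp
  finally show ?thesis .
qed

lemma q0: "q = 0"
proof -
  have le: "q \<le> q * ennreal (1 - p)"
    unfolding q_def[of] 
  proof (rule SUP_least)
    fix s assume s: "s \<in> space M"
    show "G s \<le> (SUP s\<in>space M. G s) * ennreal (1 - p)"
    proof (cases "s \<in> D")
      case True then show ?thesis using G_D[OF True] by (simp add: q_def)
    qed (simp add: G_out)
  qed
  obtain r where r: "q = ennreal r" "0 \<le> r"
    using q_le1 by (cases q rule: ennreal_cases) (auto simp: top_unique)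
  show ?thesis
  proof (cases "p \<ge> 1")
    case True
    then have "ennreal (1 - p) = 0" by (simp add: ennreal_eq_0_iff)
    then show ?thesis using le by simp
  next
    case False
    then have "ennreal r \<le> ennreal (r * (1 - p))" using le r by (simp add: ennreal_mult'')
    then have "r \<le> r * (1 - p)" using r False by (simp add: ennreal_le_iff)
    then have "r * p \<le> 0" by (simp add: algebra_simps)
    then have "r = 0" using p r(2) by (metis mult_pos_pos not_le order_le_less)
    then show ?thesis using r by simp
  qed
qed

lemma G0: "s \<in> space M \<Longrightarrow> G s = 0"
  using G_le_q[of s] q0 by simp

lemma decisive_main:
  assumes \<mu>: "\<mu> \<in> Dist M"
  shows "measure (run_measure M K \<mu>) (ev_F M B \<union> ev_F M Bt) = 1"
proof -
  let ?P = "run_measure M K \<mu>"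
  have props: "sets ?P = sets (stream_space M)" "prob_space ?P"
    "\<And>As. set As \<subseteq> sets M \<Longrightarrow> emeasure ?P (scylinder (space M) As) = cyl_prob K \<mu> As"
    using run_measure_props[OF Kk \<mu>] by auto
  interpret P: prob_space ?P by (rule props(2))
  have pmu: "prob_space \<mu>" and smu: "sets \<mu> = sets M" using \<mu> by (auto simp: Dist_def)
  have spP: "space ?P = streams (space M)"
    using sets_eq_imp_space_eq[OF props(1)] by (simp add: space_stream_space)
  have cylP: "emeasure ?P (cyl M n D) = (\<integral>\<^sup>+ s. g n s \<partial>\<mu>)" for n
  proof -
    have "set (replicate (Suc n) D) \<subseteq> sets M" using D_sets by (induction n) auto
    from props(3)[OF this] show ?thesis by (simp add: cyl_def g_def)
  qed
  have "emeasure ?P (\<Inter>n. cyl M n D) = (INF n. emeasure ?P (cyl M n D))"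
    by (rule INF_emeasure_decseq'[symmetric]) (use cyl_sets[OF D_sets] props(1) cyl_dec P.emeasure_finite in auto)
  also have "\<dots> = (INF n. \<integral>\<^sup>+ s. g n s \<partial>\<mu>)" by (simp add: cylP)
  also have "\<dots> = (\<integral>\<^sup>+ s. G s \<partial>\<mu>)"
    unfolding G_def
  proof (rule nn_integral_monotone_convergence_INF_decseq[symmetric])
    show "decseq g" by (rule g_decseq)
    fix i
    show "g i \<in> borel_measurable \<mu>" by (subst measurable_cong_sets[OF smu refl]) simp
    have "(\<integral>\<^sup>+ t. g i t \<partial>\<mu>) \<le> (\<integral>\<^sup>+ t. 1 \<partial>\<mu>)" by (intro nn_integral_mono g_le1)
    also have "\<dots> = 1" using prob_space.emeasure_space_1[OF pmu] by simp
    finally show "(\<integral>\<^sup>+ t. g i t \<partial>\<mu>) < \<infinity>" by (simp add: order_le_less_trans)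
  qed
  also have "\<dots> = (\<integral>\<^sup>+ s. 0 \<partial>\<mu>)"
    by (rule nn_integral_cong) (use G0 sets_eq_imp_space_eq[OF smu] in auto)
  finally have A0: "emeasure ?P (\<Inter>n. cyl M n D) = 0" by simp
  have Aeq: "ev_F M B \<union> ev_F M Bt = space ?P - (\<Inter>n. cyl M n D)"
    unfolding cyl_Int spP by (auto simp: D_def ev_F_def streams_iff_snth)
  have Aev: "(\<Inter>n. cyl M n D) \<in> P.events"
    using cyl_sets[OF D_sets] props(1) by auto
  show ?thesis unfolding Aeq P.prob_compl[OF Aev] using A0 by (simp add: P.emeasure_eq_measure)
qed

end

theorem mainTheorem6:
  fixes M :: "'s measure" and K :: "'s \<Rightarrow> 's measure" and B :: "'s set"
  assumes "markov_kernel M K"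
    and "B \<in> sets M"
    and "avoid_set M K B \<in> sets M"
    and "globally_coarse M K B"
  shows "decisive M K B"
proof -
  obtain p where p: "p > 0" and c: "\<And>s. s \<in> space M \<Longrightarrow>
       measure (run_measure M K (return M s)) (ev_F M B) \<ge> p \<or>
       measure (run_measure M K (return M s)) (ev_F M B) = 0"
    using assms(4) unfolding globally_coarse_def by blast
  interpret coarse_ctx M K B p
    using assms(1-3) p c by unfold_locales auto
  show ?thesis unfolding decisive_def using decisive_main by blast
qed

end
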